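(* Let $(\boldsymbol\Sigma,\sigma)$ be a primitive Markov subshift on a countable alphabet with associated set $\mathbb F$, and let $A\in C^0(\boldsymbol\Sigma)$ be bounded above, with summable variations ($\mathrm{Var}(A)<\infty$), and $\inf A|_{\bigcup_{i\in\mathbb F}[i]}>-\infty$. Then there exists a nonnegative, bounded, uniformly continuous function $u_A:\boldsymbol\Sigma\to\mathbb R_+$ with $A+u_A-u_A\circ\sigma\le\beta_A$, which is minimal in the sense that $u_A\le u$ for every nonnegative continuous sub-action $u$ of $A$, and which satisfies $\mathrm{Var}_k(u_A)\le\sum_{j\ge k}\mathrm{Var}_j(A)$ for all $k\ge1$.
   Context: Let $\mathbf M:\mathbb Z_+\times\mathbb Z_+\to\{0,1\}$ be a transition matrix. Put $\mathcal B_0=\{i:\mathbf M(i,j)=1\text{ for some }j\}$, $\mathcal B_n=\{i:\mathbf M(i,j)=1\text{ for some }j\in\mathcal B_{n-1}\}$. $\mathbf M$ is primitive if there exist $\mathbb F\subseteq\mathbb Z_+$ and an integer $K_0\ge0$ such that for all $i,j\in\bigcap_{n\ge0}\mathcal B_n$ there are $\ell_1,\dots,\ell_{K_0}\in\mathbb F$ with $\mathbf M(i,\ell_1)\mathbf M(\ell_1,\ell_2)\cdots\mathbf M(\ell_{K_0},j)=1$. $\boldsymbol\Sigma=\{\mathbf x\in\mathbb Z_+^{\mathbb Z_+}:\mathbf M(x_j,x_{j+1})=1\ \forall j\}$ with metric $d(\mathbf x,\mathbf y)=\lambda^{\min\{j:x_j\neq y_j\}}$, $\lambda\in(0,1)$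 fixed; $\sigma$ the left shift; $[i]=\{\mathbf x:x_0=i\}$. $C^0(\boldsymbol\Sigma)$ = continuous real functions. $\mathcal M_\sigma$ = $\sigma$-invariant Borel probabilities; $\beta_A=\sup_{\mu\in\mathcal M_\sigma}\int A\,d\mu$. $\mathrm{Var}_k(A)=\sup\{A(\mathbf x)-A(\mathbf y):d(\mathbf x,\mathbf y)\le\lambda^k\}$, $\mathrm{Var}(A)=\sum_{k\ge1}\mathrm{Var}_k(A)$. A sub-action for $A$ is a continuous $u$ with $A+u-u\circ\sigma\le\beta_A$ everywhere. *)

theory Defs
  imports "HOL-Probability.Probability"
begin

text \<open>Transition matrix: M i j holds iff the matrix entry M(i,j) equals 1.\<close>

definition Bset :: "(nat \<Rightarrow> nat \<Rightarrow> bool) \<Rightarrow> nat \<Rightarrow> nat set" where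
  "Bset M n = ((\<lambda>S. {i. \<exists>j\<in>S. M i j}) ^^ n) {i. \<exists>j. M i j}"

definition Bcore :: "(nat \<Rightarrow> nat \<Rightarrow> bool) \<Rightarrow> nat set" where
  "Bcore M = (\<Inter>n. Bset M n)"

definition primitive_with :: "(nat \<Rightarrow> nat \<Rightarrow> bool) \<Rightarrow> nat set \<Rightarrow> bool" where
  "primitive_with M F \<longleftrightarrow> (\<exists>K0::nat. \<forall>i\<in>Bcore M. \<forall>j\<in>Bcore M.
     \<exists>p::nat \<Rightarrow> nat. p 0 = i \<and> p (Suc K0) = j \<and> (\<forall>m\<in>{1..K0}. p m \<in> F)
        \<and> (\<forall>m\<le>K0. M (p m) (p (Suc m))))"

definition Sigma_M :: "(nat \<Rightarrow> nat \<Rightarrow> bool) \<Rightarrow> (nat \<Rightarrow> nat) set" where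
  "Sigma_M M = {x. \<forall>j. M (x j) (x (Suc j))}"

definition shift :: "(nat \<Rightarrow> nat) \<Rightarrow> (nat \<Rightarrow> nat)" where
  "shift x = (\<lambda>j. x (Suc j))"

definition dSig :: "real \<Rightarrow> (nat \<Rightarrow> nat) \<Rightarrow> (nat \<Rightarrow> nat) \<Rightarrow> real" where
  "dSig lam x y = (if x = y then 0 else lam ^ (LEAST j. x j \<noteq> y j))"

definition cont_Sig :: "(nat \<Rightarrow> nat \<Rightarrow> bool) \<Rightarrow> real \<Rightarrow> ((nat \<Rightarrow> nat) \<Rightarrow> real) \<Rightarrow> bool" where
  "cont_Sig M lam f \<longleftrightarrow> (\<forall>x\<in>Sigma_M M. \<forall>e>0. \<exists>\<delta>>0. \<forall>y\<in>Sigma_M M.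
      dSig lam x y < \<delta> \<longrightarrow> \<bar>f y - f x\<bar> < e)"

definition ucont_Sig :: "(nat \<Rightarrow> nat \<Rightarrow> bool) \<Rightarrow> real \<Rightarrow> ((nat \<Rightarrow> nat) \<Rightarrow> real) \<Rightarrow> bool" where
  "ucont_Sig M lam f \<longleftrightarrow> (\<forall>e>0. \<exists>\<delta>>0. \<forall>x\<in>Sigma_M M. \<forall>y\<in>Sigma_M M.
      dSig lam x y < \<delta> \<longrightarrow> \<bar>f y - f x\<bar> < e)"

definition open_Sig :: "(nat \<Rightarrow> nat \<Rightarrow> bool) \<Rightarrow> real \<Rightarrow> (nat \<Rightarrow> nat) set \<Rightarrow> bool" where
  "open_Sig M lam U \<longleftrightarrow> U \<subseteq> Sigma_M M \<and>
     (\<forall>x\<in>U. \<exists>e>0. \<forall>y\<in>Sigma_M M. dSig lam x y < e \<longrightarrow> y \<in> U)"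

definition borel_Sig :: "(nat \<Rightarrow> nat \<Rightarrow> bool) \<Rightarrow> real \<Rightarrow> (nat \<Rightarrow> nat) measure" where
  "borel_Sig M lam = sigma (Sigma_M M) {U. open_Sig M lam U}"

definition inv_measures :: "(nat \<Rightarrow> nat \<Rightarrow> bool) \<Rightarrow> real \<Rightarrow> (nat \<Rightarrow> nat) measure set" where
  "inv_measures M lam = {\<mu>. sets \<mu> = sets (borel_Sig M lam) \<and> prob_space \<mu> \<and>
      shift \<in> measurable \<mu> \<mu> \<and>
      (\<forall>B\<in>sets \<mu>. emeasure \<mu> (shift -` B \<inter> space \<mu>) = emeasure \<mu> B)}"

text \<open>Extended-real integral (positive part minus negative part), allowing value -\<infinity>.\<close>
definition eintegral :: "(nat \<Rightarrow> nat) measure \<Rightarrow> ((nat \<Rightarrow> nat) \<Rightarrow> real) \<Rightarrow> ereal" where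
  "eintegral \<mu> f = enn2ereal (\<integral>\<^sup>+ x. ennreal (f x) \<partial>\<mu>) - enn2ereal (\<integral>\<^sup>+ x. ennreal (- f x) \<partial>\<mu>)"

definition beta :: "(nat \<Rightarrow> nat \<Rightarrow> bool) \<Rightarrow> real \<Rightarrow> ((nat \<Rightarrow> nat) \<Rightarrow> real) \<Rightarrow> ereal" where
  "beta M lam A = (SUP \<mu>\<in>inv_measures M lam. eintegral \<mu> A)"

definition Var_k :: "(nat \<Rightarrow> nat \<Rightarrow> bool) \<Rightarrow> real \<Rightarrow> ((nat \<Rightarrow> nat) \<Rightarrow> real) \<Rightarrow> nat \<Rightarrow> ennreal" where
  "Var_k M lam A k = (SUP p\<in>{(x, y). x \<in> Sigma_M M \<and> y \<in> Sigma_M M \<and> dSig lam x y \<le> lam ^ k}.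
      ennreal (A (fst p) - A (snd p)))"

definition Var :: "(nat \<Rightarrow> nat \<Rightarrow> bool) \<Rightarrow> real \<Rightarrow> ((nat \<Rightarrow> nat) \<Rightarrow> real) \<Rightarrow> ennreal" where
  "Var M lam A = (\<Sum>k. Var_k M lam A (Suc k))"

definition sub_action :: "(nat \<Rightarrow> nat \<Rightarrow> bool) \<Rightarrow> real \<Rightarrow> ((nat \<Rightarrow> nat) \<Rightarrow> real) \<Rightarrow> ((nat \<Rightarrow> nat) \<Rightarrow> real) \<Rightarrow> bool" where
  "sub_action M lam A u \<longleftrightarrow> cont_Sig M lam u \<and>
     (\<forall>x\<in>Sigma_M M. ereal (A x + u x - u (shift x)) \<le> beta M lam A)"

end

theory Submission
  imports Defs
begin

lemma shift_funpow: "(shift ^^ n) x = (\<lambda>j. x (j + n))"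
  by (induction n arbitrary: x) (auto simp: shift_def)

lemma shift_Sigma: "x \<in> Sigma_M M \<Longrightarrow> shift x \<in> Sigma_M M"
  by (auto simp: Sigma_M_def shift_def)

lemma shiftn_Sigma: "x \<in> Sigma_M M \<Longrightarrow> (shift ^^ n) x \<in> Sigma_M M"
  by (auto simp: Sigma_M_def shift_funpow)

lemma dSig_nonneg: "0 < lam \<Longrightarrow> 0 \<le> dSig lam x y"
  by (auto simp: dSig_def)

lemma dSig_agree_le:
  assumes "0 < lam" "lam < 1" "\<forall>i<m. x i = y i"
  shows "dSig lam x y \<le> lam ^ m"
proof (cases "x = y")
  case True thus ?thesis using assms by (simp add: dSig_def)
next
  case False
  then obtain j where j: "x j \<noteq> y j" by auto
  have "m \<le> (LEAST j. x j \<noteq> y j)"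
  proof (rule ccontr)
    assume "\<not> ?thesis"
    hence "(LEAST j. x j \<noteq> y j) < m" by simp
    moreover have "x (LEAST j. x j \<noteq> y j) \<noteq> y (LEAST j. x j \<noteq> y j)" using j by (rule LeastI)
    ultimately show False using assms(3) by auto
  qed
  thus ?thesis using False assms by (simp add: dSig_def power_decreasing)
qed

lemma dSig_le_agree:
  assumes "0 < lam" "lam < 1" "dSig lam x y \<le> lam ^ m" "i < m"
  shows "x i = y i"
proof (rule ccontr)
  assume ne: "x i \<noteq> y i"
  hence xy: "x \<noteq> y" by auto
  have L: "(LEAST j. x j \<noteq> y j) \<le> i" using ne by (rule Least_le)
  have "lam ^ m < lam ^ (LEAST j. x j \<noteq> y j)"
    using L assms by (intro power_strict_decreasing) auto
  thus False using assms(3) xy by (simp add: dSig_def)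
qed

lemma dSig_lt_agree:
  assumes "0 < lam" "lam < 1" "dSig lam x y < lam ^ m" "i \<le> m"
  shows "x i = y i"
proof (rule ccontr)
  assume ne: "x i \<noteq> y i"
  hence xy: "x \<noteq> y" by auto
  have L: "(LEAST j. x j \<noteq> y j) \<le> i" using ne by (rule Least_le)
  have "lam ^ m \<le> lam ^ (LEAST j. x j \<noteq> y j)"
    using L assms by (intro power_decreasing) auto
  thus False using assms(3) xy by (simp add: dSig_def)
qed

lemma Var_k_bound:
  assumes "Var_k M lam A k \<noteq> \<infinity>" "x \<in> Sigma_M M" "y \<in> Sigma_M M" "dSig lam x y \<le> lam ^ k"
  shows "A x - A y \<le> enn2real (Var_k M lam A k)"
proof (cases "A x - A y \<le> 0")
  case True thus ?thesis by (meson enn2real_nonneg order_trans)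
next
  case False
  have "ennreal (A x - A y) \<le> Var_k M lam A k"
    unfolding Var_k_def using assms by (intro SUP_upper2[of "(x,y)"]) auto
  hence "enn2real (ennreal (A x - A y)) \<le> enn2real (Var_k M lam A k)"
    using assms(1) by (intro enn2real_mono) (auto simp: less_top)
  thus ?thesis using False by simp
qed

lemma Var_k_fin:
  assumes "Var M lam A < \<infinity>" "1 \<le> k"
  shows "Var_k M lam A k \<noteq> \<infinity>"
proof -
  obtain j where k: "k = Suc j" using assms(2) by (cases k) auto
  have "(\<Sum>i<Suc j. Var_k M lam A (Suc i)) \<le> Var M lam A"
    unfolding Var_def by (rule sum_le_suminf) auto
  moreover have "Var_k M lam A (Suc j) \<le> (\<Sum>i<Suc j. Var_k M lam A (Suc i))"
    by (simp add: add_increasing)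
  ultimately show ?thesis using assms(1) k by (auto simp: top_unique)
qed

lemma space_borel_Sig: "space (borel_Sig M lam) = Sigma_M M"
  by (simp add: borel_Sig_def space_measure_of_conv)

lemma open_in_sets: "open_Sig M lam U \<Longrightarrow> U \<in> sets (borel_Sig M lam)"
  unfolding borel_Sig_def
  by (subst sets_measure_of) (auto simp: open_Sig_def intro: sigma_sets.Basic)

lemma cont_meas:
  assumes lam: "0 < lam" "lam < 1" and f: "cont_Sig M lam f"
  shows "f \<in> borel_measurable (borel_Sig M lam)"
proof (rule borel_measurableI)
  fix S :: "real set" assume S: "open S"
  have "open_Sig M lam (f -` S \<inter> Sigma_M M)"
    unfolding open_Sig_def
  proof (intro conjI ballI)
    fix x assume x: "x \<in> f -` S \<inter> Sigma_M M"
    then obtain e where e: "e > 0" "\<forall>y. dist y (f x) < e \<longrightarrow> y \<in> S"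
      using S open_dist by blast
    obtain d where d: "d > 0" "\<forall>y\<in>Sigma_M M. dSig lam x y < d \<longrightarrow> \<bar>f y - f x\<bar> < e"
      using f x e(1) unfolding cont_Sig_def by blast
    show "\<exists>e>0. \<forall>y\<in>Sigma_M M. dSig lam x y < e \<longrightarrow> y \<in> f -` S \<inter> Sigma_M M"
      using d e by (intro exI[of _ d]) (auto simp: dist_real_def)
  qed auto
  thus "f -` S \<inter> space (borel_Sig M lam) \<in> sets (borel_Sig M lam)"
    by (simp add: space_borel_Sig open_in_sets)
qed

lemma shift_meas:
  assumes lam: "0 < lam" "lam < 1"
  shows "shift \<in> measurable (borel_Sig M lam) (borel_Sig M lam)"
proof -
  have "shift \<in> measurable (borel_Sig M lam) (sigma (Sigma_M M) {U. open_Sig M lam U})"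
  proof (rule measurable_measure_of)
    show "{U. open_Sig M lam U} \<subseteq> Pow (Sigma_M M)" by (auto simp: open_Sig_def)
    show "shift \<in> space (borel_Sig M lam) \<rightarrow> Sigma_M M"
      by (auto simp: space_borel_Sig shift_Sigma)
    fix U assume "U \<in> {U. open_Sig M lam U}"
    hence U: "open_Sig M lam U" by simp
    have "open_Sig M lam (shift -` U \<inter> Sigma_M M)"
      unfolding open_Sig_def
    proof (intro conjI ballI)
      fix x assume x: "x \<in> shift -` U \<inter> Sigma_M M"
      then obtain e where e: "e > 0" "\<forall>y\<in>Sigma_M M. dSig lam (shift x) y < e \<longrightarrow> y \<in> U"
        using U unfolding open_Sig_def by blast
      obtain m where m: "lam ^ m < e" using real_arch_pow_inv[OF e(1) lam(2)] by blast
      show "\<exists>e>0. \<forall>y\<in>Sigma_M M. dSig lam x y < e \<longrightarrow> y \<in> shift -` U \<inter> Sigma_M M"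
      proof (intro exI[of _ "lam ^ (Suc m)"] conjI ballI impI)
        show "0 < lam ^ Suc m" using lam by simp
        fix y assume y: "y \<in> Sigma_M M" "dSig lam x y < lam ^ Suc m"
        have "\<forall>i<m. shift x i = shift y i"
          using dSig_lt_agree[OF lam y(2)] by (auto simp: shift_def)
        hence "dSig lam (shift x) (shift y) \<le> lam ^ m" by (rule dSig_agree_le[OF lam])
        hence "shift y \<in> U" using e m y(1) shift_Sigma by fastforce
        thus "y \<in> shift -` U \<inter> Sigma_M M" using y by auto
      qed
    qed auto
    thus "shift -` U \<inter> space (borel_Sig M lam) \<in> sets (borel_Sig M lam)"
      by (simp add: space_borel_Sig open_in_sets)
  qed
  thus ?thesis by (simp add: borel_Sig_def)
qed

lemma funpow_mod_period:
  assumes per: "(shift ^^ P) z = z"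
  shows "(shift ^^ m) z = (shift ^^ (m mod P)) z"
proof -
  have "(shift ^^ (q * P + r)) z = (shift ^^ r) z" for q r
  proof (induction q)
    case (Suc q)
    have e: "Suc q * P + r = (q * P + r) + P" by simp
    have "(shift ^^ (Suc q * P + r)) z = (shift ^^ (q * P + r)) ((shift ^^ P) z)"
      by (simp only: e funpow_add comp_apply)
    thus ?case using Suc per by simp
  qed simp
  from this[of "m div P" "m mod P"] show ?thesis by simp
qed

lemma card_shift_eq:
  assumes per: "(shift ^^ P) z = z" and P: "0 < P"
  shows "card {i\<in>{..<P}. (shift ^^ Suc i) z \<in> B} = card {i\<in>{..<P}. (shift ^^ i) z \<in> B}"
proof -
  let ?g = "\<lambda>i. Suc i mod P"
  have inj: "inj_on ?g {i\<in>{..<P}. (shift ^^ Suc i) z \<in> B}"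
  proof (rule inj_onI)
    fix i j assume i: "i \<in> {i\<in>{..<P}. (shift ^^ Suc i) z \<in> B}" and j: "j \<in> {i\<in>{..<P}. (shift ^^ Suc i) z \<in> B}"
      and eq: "Suc i mod P = Suc j mod P"
    from i j have "i < P" "j < P" by auto
    thus "i = j" using eq
      by (cases "Suc i = P"; cases "Suc j = P") auto
  qed
  have img: "?g ` {i\<in>{..<P}. (shift ^^ Suc i) z \<in> B} = {i\<in>{..<P}. (shift ^^ i) z \<in> B}"
  proof
    show "?g ` {i\<in>{..<P}. (shift ^^ Suc i) z \<in> B} \<subseteq> {i\<in>{..<P}. (shift ^^ i) z \<in> B}"
      using funpow_mod_period[OF per] P by auto
    show "{i\<in>{..<P}. (shift ^^ i) z \<in> B} \<subseteq> ?g ` {i\<in>{..<P}. (shift ^^ Suc i) z \<in> B}"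
    proof
      fix j assume j: "j \<in> {i\<in>{..<P}. (shift ^^ i) z \<in> B}"
      show "j \<in> ?g ` {i\<in>{..<P}. (shift ^^ Suc i) z \<in> B}"
      proof (cases j)
        case 0
        have "Suc (P - 1) = P" using P by simp
        hence "(shift ^^ Suc (P - 1)) z = (shift ^^ P) z" by (simp only:)
        hence "?g (P - 1) = j" "(shift ^^ Suc (P - 1)) z \<in> B" using 0 j per P by auto
        thus ?thesis using P by (intro image_eqI[of _ _ "P - 1"]) (auto simp del: funpow.simps)
      next
        case (Suc k)
        thus ?thesis using j by (intro image_eqI[of _ _ k]) auto
      qed
    qed
  qed
  show ?thesis using card_image[OF inj] img by simp
qed

lemma periodic_beta:
  assumes lam: "0 < lam" "lam < 1" and contA: "cont_Sig M lam A"
    and z: "z \<in> Sigma_M M" and P: "0 < P" and per: "(shift ^^ P) z = z"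
  shows "ereal ((\<Sum>i<P. A ((shift ^^ i) z)) / P) \<le> beta M lam A"
proof -
  let ?U = "uniform_count_measure {..<P}"
  let ?T = "\<lambda>i. (shift ^^ i) z"
  define \<mu> where "\<mu> = distr ?U (borel_Sig M lam) ?T"
  have Tm: "?T \<in> measurable ?U (borel_Sig M lam)"
    using shiftn_Sigma[OF z]
    by (subst measurable_cong_sets[OF sets_uniform_count_measure_count_space refl])
       (auto simp: space_borel_Sig)
  have Up: "prob_space ?U" using P by (intro prob_space_uniform_count_measure) auto
  have sets\<mu>: "sets \<mu> = sets (borel_Sig M lam)" by (simp add: \<mu>_def)
  have space\<mu>: "space \<mu> = Sigma_M M" by (simp add: \<mu>_def space_borel_Sig)
  have sm: "shift \<in> measurable \<mu> \<mu>"
    using shift_meas[OF lam] by (simp add: measurable_cong_sets[OF sets\<mu> sets\<mu>])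
  have inv: "\<mu> \<in> inv_measures M lam"
    unfolding inv_measures_def
  proof (intro CollectI conjI ballI)
    show "prob_space \<mu>" unfolding \<mu>_def by (rule prob_space.prob_space_distr[OF Up Tm])
    fix B assume B: "B \<in> sets \<mu>"
    hence B': "B \<in> sets (borel_Sig M lam)" using sets\<mu> by simp
    have pre: "shift -` B \<inter> Sigma_M M \<in> sets (borel_Sig M lam)"
      using measurable_sets[OF sm B] sets\<mu> by (simp add: space\<mu> space_borel_Sig)
    have "emeasure \<mu> (shift -` B \<inter> space \<mu>) = emeasure ?U (?T -` (shift -` B \<inter> Sigma_M M) \<inter> {..<P})"
      unfolding space\<mu> unfolding \<mu>_def using pre by (subst emeasure_distr[OF Tm]) (auto simp: space_uniform_count_measure)
    also have "?T -` (shift -` B \<inter> Sigma_M M) \<inter> {..<P} = {i\<in>{..<P}. (shift ^^ Suc i) z \<in> B}"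
      using shiftn_Sigma[OF z] by (auto simp: space\<mu> funpow_swap1)
    also have "emeasure ?U {i\<in>{..<P}. (shift ^^ Suc i) z \<in> B} = emeasure ?U {i\<in>{..<P}. (shift ^^ i) z \<in> B}"
      using card_shift_eq[OF per P, of B] by (subst (1 2) emeasure_uniform_count_measure) (auto simp del: funpow.simps)
    also have "{i\<in>{..<P}. (shift ^^ i) z \<in> B} = ?T -` B \<inter> space ?U"
      by (auto simp: space_uniform_count_measure)
    also have "emeasure ?U (?T -` B \<inter> space ?U) = emeasure \<mu> B"
      unfolding \<mu>_def using B' by (subst emeasure_distr[OF Tm]) auto
    finally show "emeasure \<mu> (shift -` B \<inter> space \<mu>) = emeasure \<mu> B" .
  qed (use sets\<mu> sm in auto)
  have Am: "A \<in> borel_measurable (borel_Sig M lam)" by (rule cont_meas[OF lam contA])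
  have int: "(\<integral>\<^sup>+ x. ennreal (f x) \<partial>\<mu>) = ennreal ((\<Sum>i<P. max 0 (f (?T i))) / P)"
    if fm: "f \<in> borel_measurable (borel_Sig M lam)" for f
  proof -
    have "(\<integral>\<^sup>+ x. ennreal (f x) \<partial>\<mu>) = (\<integral>\<^sup>+ i. ennreal (f (?T i)) \<partial>?U)"
      unfolding \<mu>_def using fm by (subst nn_integral_distr[OF Tm]) auto
    also have "\<dots> = (\<Sum>i<P. ennreal (1 / card {..<P}) * ennreal (f (?T i)))"
      unfolding uniform_count_measure_def by (subst nn_integral_point_measure_finite) auto
    also have "\<dots> = (\<Sum>i<P. ennreal (max 0 (f (?T i)) / P))"
      by (intro sum.cong refl) (auto simp: ennreal_mult[symmetric] max_def ennreal_neg)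
    also have "\<dots> = ennreal ((\<Sum>i<P. max 0 (f (?T i))) / P)"
      by (subst sum_ennreal) (auto simp: sum_divide_distrib)
    finally show ?thesis .
  qed
  have "eintegral \<mu> A = ereal ((\<Sum>i<P. max 0 (A (?T i))) / P) - ereal ((\<Sum>i<P. max 0 (- A (?T i))) / P)"
    unfolding eintegral_def using Am
    by (simp add: int sum_nonneg borel_measurable_uminus)
  also have "\<dots> = ereal ((\<Sum>i<P. A (?T i)) / P)"
  proof -
    have "(\<Sum>i<P. max 0 (A (?T i)) - max 0 (- A (?T i))) = (\<Sum>i<P. A (?T i))"
      by (intro sum.cong refl) (auto simp: max_def)
    thus ?thesis by (simp add: diff_divide_distrib[symmetric] sum_subtractf[symmetric])
  qed
  finally have "eintegral \<mu> A = ereal ((\<Sum>i<P. A (?T i)) / P)" .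
  moreover have "eintegral \<mu> A \<le> beta M lam A"
    unfolding beta_def using inv by (rule SUP_upper)
  ultimately show ?thesis by simp
qed

lemma periodic_closing:
  assumes y: "y \<in> Sigma_M M" and n: "1 \<le> n"
    and p0: "p 0 = y (n - 1)" and pK: "p (Suc K0) = y 0"
    and pF: "\<forall>m\<in>{1..K0}. p m \<in> F" and pM: "\<forall>m\<le>K0. M (p m) (p (Suc m))"
  shows "\<exists>z\<in>Sigma_M M. (shift ^^ (n + K0)) z = z \<and> (\<forall>i<n. z i = y i)
           \<and> (\<forall>i. n \<le> i \<and> i < n + K0 \<longrightarrow> z i \<in> F)"
proof -
  define P where "P = n + K0"
  define w where "w i = (if i < n then y i else p (i - n + 1))" for i
  define z where "z j = w (j mod P)" for j
  have P: "0 < P" using n by (simp add: P_def)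
  have wP: "w P = w 0" using n pK by (simp add: w_def P_def)
  have wM: "M (w i) (w (Suc i))" if i: "i < P" for i
  proof -
    consider "Suc i < n" | "Suc i = n" | "n \<le> i" by linarith
    thus ?thesis
    proof cases
      case 1 thus ?thesis using y by (simp add: w_def Sigma_M_def)
    next
      case 2
      hence "w i = p 0" "w (Suc i) = p 1" using p0 by (auto simp: w_def)
      thus ?thesis using pM by auto
    next
      case 3
      hence "w i = p (i - n + 1)" "w (Suc i) = p (Suc (i - n + 1))" "i - n + 1 \<le> K0"
        using i by (auto simp: w_def P_def Suc_diff_le)
      thus ?thesis using pM by auto
    qed
  qed
  have zS: "z \<in> Sigma_M M"
    unfolding Sigma_M_def
  proof (intro CollectI allI)
    fix j
    have r: "j mod P < P" using P by simp
    show "M (z j) (z (Suc j))"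
    proof (cases "Suc (j mod P) = P")
      case True
      hence "z (Suc j) = w P" using wP by (simp add: z_def mod_Suc)
      thus ?thesis using wM[OF r] True by (simp add: z_def)
    next
      case False
      hence "z (Suc j) = w (Suc (j mod P))" by (simp add: z_def mod_Suc)
      thus ?thesis using wM[OF r] by (simp add: z_def)
    qed
  qed
  have per: "(shift ^^ P) z = z" by (auto simp: shift_funpow z_def)
  have ag: "\<forall>i<n. z i = y i" by (auto simp: z_def w_def P_def)
  have inF: "\<forall>i. n \<le> i \<and> i < n + K0 \<longrightarrow> z i \<in> F"
  proof (intro allI impI)
    fix i assume i: "n \<le> i \<and> i < n + K0"
    hence "z i = p (i - n + 1)" by (simp add: z_def w_def P_def)
    thus "z i \<in> F" using pF i by auto
  qed
  show ?thesis using zS per ag inF unfolding P_def by blast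
qed

lemma Sigma_Bcore:
  assumes "x \<in> Sigma_M M" shows "x i \<in> Bcore M"
proof -
  have "\<forall>i. x i \<in> Bset M n" for n
  proof (induction n)
    case 0 thus ?case using assms by (auto simp: Bset_def Sigma_M_def)
  next
    case (Suc n)
    show ?case
    proof
      fix i
      have "M (x i) (x (Suc i))" using assms by (auto simp: Sigma_M_def)
      thus "x i \<in> Bset M (Suc n)" using Suc by (auto simp: Bset_def)
    qed
  qed
  thus ?thesis by (auto simp: Bcore_def)
qed

lemma dSig_sym_le:
  assumes "0 < lam" "lam < 1" "dSig lam x y \<le> lam ^ k"
  shows "dSig lam y x \<le> lam ^ k"
  using dSig_le_agree[OF assms] by (intro dSig_agree_le[OF assms(1,2)]) auto

theorem mainTheorem6:
  fixes M :: "nat \<Rightarrow> nat \<Rightarrow> bool" and F :: "nat set" and lam :: real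
    and A :: "(nat \<Rightarrow> nat) \<Rightarrow> real"
  assumes lam: "0 < lam" "lam < 1"
    and prim: "primitive_with M F"
    and contA: "cont_Sig M lam A"
    and bdd_above: "\<exists>c. \<forall>x\<in>Sigma_M M. A x \<le> c"
    and var: "Var M lam A < \<infinity>"
    and infF: "\<exists>c. \<forall>x\<in>Sigma_M M. x 0 \<in> F \<longrightarrow> c \<le> A x"
  shows "\<exists>uA :: (nat \<Rightarrow> nat) \<Rightarrow> real.
      (\<forall>x\<in>Sigma_M M. 0 \<le> uA x)
    \<and> (\<exists>C. \<forall>x\<in>Sigma_M M. uA x \<le> C)
    \<and> ucont_Sig M lam uA
    \<and> (\<forall>x\<in>Sigma_M M. ereal (A x + uA x - uA (shift x)) \<le> beta M lam A)
    \<and> (\<forall>u. sub_action M lam A u \<and> (\<forall>x\<in>Sigma_M M. 0 \<le> u x) \<longrightarrow>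
           (\<forall>x\<in>Sigma_M M. uA x \<le> u x))
    \<and> (\<forall>k\<ge>1. Var_k M lam uA k \<le> (\<Sum>j. Var_k M lam A (j + k)))"
proof (cases "Sigma_M M = {} \<or> beta M lam A = \<infinity>")
  case True
  have V0: "Var_k M lam (\<lambda>_. 0) k \<le> X" for k X
    unfolding Var_k_def by (rule SUP_least) simp
  show ?thesis
    using True V0 by (intro exI[of _ "\<lambda>_. 0"]) (auto simp: ucont_Sig_def intro: exI[of _ 1])
next
  case False
  then obtain x0 where x0: "x0 \<in> Sigma_M M" and bnt: "beta M lam A \<noteq> \<infinity>" by auto
  obtain K0 where K0: "\<forall>i\<in>Bcore M. \<forall>j\<in>Bcore M.
     \<exists>p::nat \<Rightarrow> nat. p 0 = i \<and> p (Suc K0) = j \<and> (\<forall>m\<in>{1..K0}. p m \<in> F)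
        \<and> (\<forall>m\<le>K0. M (p m) (p (Suc m)))"
    using prim unfolding primitive_with_def by blast
  obtain cF where cF: "\<forall>x\<in>Sigma_M M. x 0 \<in> F \<longrightarrow> cF \<le> A x" using infF by blast
  define Sn where "Sn y n = (\<Sum>i<n. A ((shift ^^ i) y))" for y n
  have close: "\<exists>z\<in>Sigma_M M. (shift ^^ (n + K0)) z = z \<and> (\<forall>i<n. z i = y i)
           \<and> (\<forall>i. n \<le> i \<and> i < n + K0 \<longrightarrow> z i \<in> F)"
    if y: "y \<in> Sigma_M M" and n: "1 \<le> n" for y n
  proof -
    obtain p where "p 0 = y (n - 1) \<and> p (Suc K0) = y 0 \<and> (\<forall>m\<in>{1..K0}. p m \<in> F)
        \<and> (\<forall>m\<le>K0. M (p m) (p (Suc m)))"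
      using K0 Sigma_Bcore[OF y] by blast
    thus ?thesis using periodic_closing[OF y n] by blast
  qed
  have pb: "Sn z (n + K0) \<le> real (n + K0) * b"
    if "beta M lam A = ereal b" "z \<in> Sigma_M M" "(shift ^^ (n + K0)) z = z" "1 \<le> n" for z n b
  proof -
    have "ereal (Sn z (n + K0) / real (n + K0)) \<le> ereal b"
      using periodic_beta[OF lam contA that(2) _ that(3)] that(1,4) by (simp add: Sn_def)
    hence "Sn z (n + K0) / real (n + K0) \<le> b" by simp
    thus ?thesis using that(4) by (simp add: divide_le_eq mult.commute)
  qed
  obtain b where b: "beta M lam A = ereal b"
  proof -
    obtain z where z: "z \<in> Sigma_M M" "(shift ^^ (1 + K0)) z = z" using close[OF x0, of 1] by auto
    have "ereal ((\<Sum>i<1 + K0. A ((shift ^^ i) z)) / real (1 + K0)) \<le> beta M lam A"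
      by (rule periodic_beta[OF lam contA z(1) _ z(2)]) simp
    hence "beta M lam A \<noteq> -\<infinity>" by auto
    thus ?thesis using bnt that by (cases "beta M lam A") auto
  qed
  define V where "V k = enn2real (Var_k M lam A k)" for k
  define Vt where "Vt = enn2real (Var M lam A)"
  have Vfin: "Var_k M lam A k \<noteq> \<infinity>" if "1 \<le> k" for k using Var_k_fin[OF var that] .
  have Vnn: "0 \<le> V k" for k by (simp add: V_def)
  have Vb: "A x - A y \<le> V k"
    if "1 \<le> k" "x \<in> Sigma_M M" "y \<in> Sigma_M M" "dSig lam x y \<le> lam ^ k" for k x y
    unfolding V_def using Var_k_bound[OF Vfin[OF that(1)] that(2-4)] .
  have VS: "ennreal (V k) = Var_k M lam A k" if "1 \<le> k" for k
    using Vfin[OF that] by (simp add: V_def less_top)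
  have Vsum: "(\<Sum>j<n. V (Suc j)) \<le> Vt" for n
  proof -
    have "ennreal (\<Sum>j<n. V (Suc j)) = (\<Sum>j<n. Var_k M lam A (Suc j))"
      using VS Vnn by (subst sum_ennreal[symmetric]) auto
    also have "\<dots> \<le> Var M lam A" unfolding Var_def by (rule sum_le_suminf) auto
    also have "\<dots> = ennreal Vt" using var by (simp add: Vt_def)
    finally show ?thesis by (simp add: Vt_def ennreal_le_iff)
  qed
  define S where "S x = insert 0 {Sn y n - real n * b | y n. y \<in> Sigma_M M \<and> 1 \<le> n \<and> (shift ^^ n) y = x}" for x
  define w where "w x = Sup (S x)" for x
  define C where "C = max 0 (real K0 * (b - cF) + Vt)"
  have elem: "Sn y n - real n * b \<le> C" if y: "y \<in> Sigma_M M" and n: "1 \<le> n" for y n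
  proof -
    obtain z where z: "z \<in> Sigma_M M" "(shift ^^ (n + K0)) z = z" "\<forall>i<n. z i = y i"
      "\<forall>i. n \<le> i \<and> i < n + K0 \<longrightarrow> z i \<in> F" using close[OF y n] by blast
    have per: "Sn z (n + K0) \<le> real (n + K0) * b" by (rule pb[OF b z(1,2) n])
    have split: "Sn z (n + K0) = Sn z n + (\<Sum>i\<in>{n..<n + K0}. A ((shift ^^ i) z))"
      unfolding Sn_def by (subst sum.atLeastLessThan_concat[of 0 n "n+K0", symmetric, simplified atLeast0LessThan]) auto
    have tail: "real K0 * cF \<le> (\<Sum>i\<in>{n..<n + K0}. A ((shift ^^ i) z))"
    proof -
      have "real (card {n..<n + K0}) * cF \<le> (\<Sum>i\<in>{n..<n + K0}. A ((shift ^^ i) z))"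
      proof (rule sum_bounded_below)
        fix i assume "i \<in> {n..<n + K0}"
        hence "((shift ^^ i) z) 0 \<in> F" using z(4) by (simp add: shift_funpow)
        thus "cF \<le> A ((shift ^^ i) z)" using cF shiftn_Sigma[OF z(1)] by blast
      qed
      thus ?thesis by simp
    qed
    have diff: "Sn y n - Sn z n \<le> Vt"
    proof -
      have "Sn y n - Sn z n = (\<Sum>i<n. A ((shift ^^ i) y) - A ((shift ^^ i) z))"
        by (simp add: Sn_def sum_subtractf)
      also have "\<dots> \<le> (\<Sum>i<n. V (n - i))"
      proof (rule sum_mono)
        fix i assume i: "i \<in> {..<n}"
        have "dSig lam ((shift ^^ i) y) ((shift ^^ i) z) \<le> lam ^ (n - i)"
          using z(3) by (intro dSig_agree_le[OF lam]) (auto simp: shift_funpow)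
        thus "A ((shift ^^ i) y) - A ((shift ^^ i) z) \<le> V (n - i)"
          using i by (intro Vb shiftn_Sigma y z(1)) auto
      qed
      also have "(\<Sum>i<n. V (n - i)) = (\<Sum>j<n. V (Suc j))"
      proof -
        have "(\<Sum>i<n. V (n - i)) = (\<Sum>i<n. (\<lambda>j. V (Suc j)) (n - Suc i))"
          by (intro sum.cong refl) (simp add: Suc_diff_Suc)
        thus ?thesis using sum.nat_diff_reindex[of "\<lambda>j. V (Suc j)" n] by simp
      qed
      also have "\<dots> \<le> Vt" by (rule Vsum)
      finally show ?thesis .
    qed
    have "Sn y n - real n * b \<le> Vt + Sn z n - real n * b" using diff by simp
    also have "\<dots> \<le> Vt + real (n + K0) * b - real K0 * cF - real n * b" using per split tail by simp
    also have "\<dots> = real K0 * (b - cF) + Vt" by (simp add: algebra_simps)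
    finally show ?thesis by (simp add: C_def)
  qed
  have bdd: "bdd_above (S x)" for x
    by (rule bdd_aboveI[of _ C]) (auto simp: S_def C_def intro: elem[THEN order_trans])
  have w_ge: "s \<le> w x" if "s \<in> S x" for s x unfolding w_def using bdd[of x] that by (intro cSup_upper)
  have w_nn: "0 \<le> w x" for x by (rule w_ge) (simp add: S_def)
  have w_le: "w x \<le> C" for x
    unfolding w_def by (rule cSup_least) (auto simp: S_def C_def intro: elem[THEN order_trans])
  have Sn_Suc: "Sn y (Suc n) = Sn y n + A ((shift ^^ n) y)" for y n by (simp add: Sn_def)
  have sub: "A x + w x - w (shift x) \<le> b" if x: "x \<in> Sigma_M M" for x
  proof -
    have "w x \<le> w (shift x) - A x + b"
      unfolding w_def[of x]
    proof (rule cSup_least)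
      show "S x \<noteq> {}" by (simp add: S_def)
      fix s assume "s \<in> S x"
      then consider "s = 0" | y n where "s = Sn y n - real n * b" "y \<in> Sigma_M M" "1 \<le> n" "(shift ^^ n) y = x"
        unfolding S_def by blast
      thus "s \<le> w (shift x) - A x + b"
      proof cases
        case 1
        have "Sn x 1 - real 1 * b \<in> S (shift x)" unfolding S_def using x by force
        hence "A x - b \<le> w (shift x)" using w_ge by (simp add: Sn_def)
        thus ?thesis using 1 by simp
      next
        case 2
        have "Sn y (Suc n) - real (Suc n) * b \<in> S (shift x)"
          unfolding S_def using 2 by (intro insertI2 CollectI exI[of _ y] exI[of _ "Suc n"]) auto
        hence "Sn y (Suc n) - real (Suc n) * b \<le> w (shift x)" by (rule w_ge)
        thus ?thesis using 2 by (simp add: Sn_Suc algebra_simps)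
      qed
    qed
    thus ?thesis by simp
  qed
  have minimal: "w x \<le> u x" if u: "sub_action M lam A u" "\<forall>x\<in>Sigma_M M. 0 \<le> u x" and x: "x \<in> Sigma_M M" for u x
  proof -
    have ub: "A y + u y - u (shift y) \<le> b" if "y \<in> Sigma_M M" for y
      using u(1) that b unfolding sub_action_def by auto
    have it: "Sn y n - real n * b + u y \<le> u ((shift ^^ n) y)" if y: "y \<in> Sigma_M M" for y n
    proof (induction n)
      case 0 thus ?case by (simp add: Sn_def)
    next
      case (Suc n)
      have "Sn y (Suc n) - real (Suc n) * b + u y = (Sn y n - real n * b + u y) + A ((shift ^^ n) y) - b"
        by (simp add: Sn_Suc algebra_simps)
      also have "\<dots> \<le> u ((shift ^^ n) y) + A ((shift ^^ n) y) - b" using Suc by simp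
      also have "\<dots> \<le> u (shift ((shift ^^ n) y))" using ub[OF shiftn_Sigma[OF y, of n]] by simp
      finally show ?case by simp
    qed
    show ?thesis
      unfolding w_def
    proof (rule cSup_least)
      show "S x \<noteq> {}" by (simp add: S_def)
      fix s assume "s \<in> S x"
      then consider "s = 0" | y n where "s = Sn y n - real n * b" "y \<in> Sigma_M M" "1 \<le> n" "(shift ^^ n) y = x"
        unfolding S_def by blast
      thus "s \<le> u x"
      proof cases
        case 1 thus ?thesis using u(2) x by simp
      next
        case 2
        have "0 \<le> u y" using u(2) 2(2) by blast
        thus ?thesis using it[OF 2(2), of n] 2 by simp
      qed
    qed
  qed
  have core: "w x \<le> w x' + r"
    if k: "1 \<le> k" and x: "x \<in> Sigma_M M" and x': "x' \<in> Sigma_M M" and d: "dSig lam x x' \<le> lam ^ k"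
      and r: "\<forall>n. (\<Sum>j<n. V (j + 1 + k)) \<le> r" "0 \<le> r" for k x x' r
  proof -
    have ag: "x i = x' i" if "i < k" for i using dSig_le_agree[OF lam d that] .
    show ?thesis
      unfolding w_def[of x]
    proof (rule cSup_least)
      show "S x \<noteq> {}" by (simp add: S_def)
      fix s assume "s \<in> S x"
      then consider "s = 0" | y n where "s = Sn y n - real n * b" "y \<in> Sigma_M M" "1 \<le> n" "(shift ^^ n) y = x"
        unfolding S_def by blast
      thus "s \<le> w x' + r"
      proof cases
        case 1 thus ?thesis using w_nn[of x'] r(2) by simp
      next
        case 2
        note y = 2(2) and n = 2(3) and yx = 2(4)
        have yx': "y (j + n) = x j" for j using yx by (metis shift_funpow)
        define y' where "y' j = (if j < n then y j else x' (j - n))" for j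
        have y'S: "y' \<in> Sigma_M M"
          unfolding Sigma_M_def
        proof (intro CollectI allI)
          fix j
          consider "Suc j < n" | "Suc j = n" | "n \<le> j" by linarith
          thus "M (y' j) (y' (Suc j))"
          proof cases
            case 1 thus ?thesis using y by (simp add: y'_def Sigma_M_def)
          next
            case 2
            have "y n = x 0" using yx'[of 0] by simp
            also have "\<dots> = x' 0" using ag k by simp
            finally have "y' (Suc j) = y (Suc j)" using 2 by (simp add: y'_def)
            moreover have "y' j = y j" using 2 by (simp add: y'_def)
            ultimately show ?thesis using y by (simp add: Sigma_M_def)
          next
            case 3
            hence "y' j = x' (j - n)" "y' (Suc j) = x' (Suc (j - n))" by (auto simp: y'_def Suc_diff_le)
            thus ?thesis using x' by (simp add: Sigma_M_def)
          qed
        qed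
        have y'x': "(shift ^^ n) y' = x'" by (auto simp: shift_funpow y'_def)
        have "Sn y n - Sn y' n \<le> r"
        proof -
          have "Sn y n - Sn y' n = (\<Sum>i<n. A ((shift ^^ i) y) - A ((shift ^^ i) y'))"
            by (simp add: Sn_def sum_subtractf)
          also have "\<dots> \<le> (\<Sum>i<n. V (n + k - i))"
          proof (rule sum_mono)
            fix i assume i: "i \<in> {..<n}"
            have "dSig lam ((shift ^^ i) y) ((shift ^^ i) y') \<le> lam ^ (n + k - i)"
            proof (intro dSig_agree_le[OF lam] allI impI)
              fix c assume c: "c < n + k - i"
              show "(shift ^^ i) y c = (shift ^^ i) y' c"
              proof (cases "c + i < n")
                case True thus ?thesis by (simp add: shift_funpow y'_def)
              next
                case False
                have "y (c + i) = x (c + i - n)" using yx'[of "c + i - n"] False by simp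
                also have "\<dots> = x' (c + i - n)" using ag c False i by auto
                finally show ?thesis using False by (simp add: shift_funpow y'_def)
              qed
            qed
            thus "A ((shift ^^ i) y) - A ((shift ^^ i) y') \<le> V (n + k - i)"
              using i by (intro Vb shiftn_Sigma y y'S) auto
          qed
          also have "(\<Sum>i<n. V (n + k - i)) = (\<Sum>j<n. V (j + 1 + k))"
          proof -
            have "(\<Sum>i<n. V (n + k - i)) = (\<Sum>i<n. (\<lambda>j. V (j + 1 + k)) (n - Suc i))"
            proof (intro sum.cong refl)
              fix i assume "i \<in> {..<n}"
              hence e1: "n - Suc i + 1 + k = n + k - i" by auto
              have "(\<lambda>j. V (j + 1 + k)) (n - Suc i) = V (n - Suc i + 1 + k)" by (rule refl)
              thus "V (n + k - i) = (\<lambda>j. V (j + 1 + k)) (n - Suc i)" by (simp only: e1)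
            qed
            thus ?thesis using sum.nat_diff_reindex[of "\<lambda>j. V (j + 1 + k)" n] by simp
          qed
          also have "\<dots> \<le> r" using r(1) by blast
          finally show ?thesis .
        qed
        moreover have "Sn y' n - real n * b \<in> S x'"
          unfolding S_def using y'S n y'x' by blast
        hence "Sn y' n - real n * b \<le> w x'" by (rule w_ge)
        ultimately show ?thesis using 2(1) by simp
      qed
    qed
  qed
  have varb: "Var_k M lam w k \<le> (\<Sum>j. Var_k M lam A (j + k))" if k: "1 \<le> k" for k
  proof (cases "(\<Sum>j. Var_k M lam A (j + k)) = \<top>")
    case True thus ?thesis by simp
  next
    case False
    define R where "R = (\<Sum>j. Var_k M lam A (j + k))"
    define r where "r = enn2real R"
    have Rr: "R = ennreal r" using False by (simp add: r_def R_def less_top)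
    have r0: "0 \<le> r" by (simp add: r_def)
    have rb: "\<forall>n. (\<Sum>j<n. V (j + 1 + k)) \<le> r"
    proof
      fix n
      have "ennreal (\<Sum>j<n. V (j + 1 + k)) = (\<Sum>j<n. Var_k M lam A (Suc j + k))"
        using VS Vnn by (subst sum_ennreal[symmetric]) auto
      also have "\<dots> \<le> (\<Sum>j<Suc n. Var_k M lam A (j + k))"
        by (subst sum.lessThan_Suc_shift) simp
      also have "\<dots> \<le> R" unfolding R_def by (rule sum_le_suminf) auto
      finally show "(\<Sum>j<n. V (j + 1 + k)) \<le> r" using Rr r0 by (simp add: ennreal_le_iff)
    qed
    have "Var_k M lam w k \<le> ennreal r"
      unfolding Var_k_def
    proof (rule SUP_least)
      fix p assume "p \<in> {(x, y). x \<in> Sigma_M M \<and> y \<in> Sigma_M M \<and> dSig lam x y \<le> lam ^ k}"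
      then obtain x y where p: "p = (x, y)" "x \<in> Sigma_M M" "y \<in> Sigma_M M" "dSig lam x y \<le> lam ^ k" by auto
      have "w x \<le> w y + r" by (rule core[OF k p(2,3,4) rb r0])
      thus "ennreal (w (fst p) - w (snd p)) \<le> ennreal r" using p by (intro ennreal_leI) simp
    qed
    thus ?thesis using Rr R_def by simp
  qed
  have gsum: "summable (\<lambda>j. V (Suc j))"
  proof (rule summable_suminf_not_top)
    show "0 \<le> V (Suc j)" for j by (rule Vnn)
    have "(\<Sum>j. ennreal (V (Suc j))) = Var M lam A" unfolding Var_def using VS by simp
    thus "(\<Sum>j. ennreal (V (Suc j))) \<noteq> \<top>" using var by simp
  qed
  have ucont: "ucont_Sig M lam w"
    unfolding ucont_Sig_def
  proof (intro allI impI)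
    fix e :: real assume e: "0 < e"
    obtain N where N: "\<forall>m\<ge>N. norm (\<Sum>i. V (Suc (i + m))) < e"
      using suminf_exist_split[OF e gsum] by auto
    define T where "T = (\<Sum>i. V (Suc (i + Suc N)))"
    have sT: "summable (\<lambda>i. V (Suc (i + Suc N)))"
      using summable_ignore_initial_segment[OF gsum, of "Suc N"] by simp
    have T0: "0 \<le> T" unfolding T_def by (rule suminf_nonneg[OF sT]) (simp add: Vnn)
    have Te: "T < e" using N[rule_format, of "Suc N"] T0 by (simp add: T_def)
    have rb: "\<forall>n. (\<Sum>j<n. V (j + 1 + Suc N)) \<le> T"
    proof
      fix n
      have "(\<Sum>j<n. V (j + 1 + Suc N)) = (\<Sum>j<n. V (Suc (j + Suc N)))" by simp
      also have "\<dots> \<le> T" unfolding T_def by (rule sum_le_suminf[OF sT]) (auto simp: Vnn)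
      finally show "(\<Sum>j<n. V (j + 1 + Suc N)) \<le> T" .
    qed
    show "\<exists>\<delta>>0. \<forall>x\<in>Sigma_M M. \<forall>y\<in>Sigma_M M. dSig lam x y < \<delta> \<longrightarrow> \<bar>w y - w x\<bar> < e"
    proof (intro exI[of _ "lam ^ Suc N"] conjI ballI impI)
      show "0 < lam ^ Suc N" using lam by simp
      fix x y assume xy: "x \<in> Sigma_M M" "y \<in> Sigma_M M" "dSig lam x y < lam ^ Suc N"
      have d1: "dSig lam x y \<le> lam ^ Suc N" using xy(3) by simp
      have d2: "dSig lam y x \<le> lam ^ Suc N" by (rule dSig_sym_le[OF lam d1])
      have "w x \<le> w y + T" by (rule core[OF _ xy(1,2) d1 rb T0]) simp
      moreover have "w y \<le> w x + T" by (rule core[OF _ xy(2,1) d2 rb T0]) simp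
      ultimately show "\<bar>w y - w x\<bar> < e" using Te by simp
    qed
  qed
  show ?thesis
  proof (intro exI[of _ w] conjI allI impI ballI)
    show "\<exists>C. \<forall>x\<in>Sigma_M M. w x \<le> C" using w_le by blast
    show "ucont_Sig M lam w" by (rule ucont)
  next
    fix x assume "x \<in> Sigma_M M"
    thus "ereal (A x + w x - w (shift x)) \<le> beta M lam A" using sub b by simp
  next
    fix u x assume "sub_action M lam A u \<and> (\<forall>x\<in>Sigma_M M. 0 \<le> u x)" "x \<in> Sigma_M M"
    thus "w x \<le> u x" using minimal by blast
  next
    fix k :: nat assume "1 \<le> k" thus "Var_k M lam w k \<le> (\<Sum>j. Var_k M lam A (j + k))" by (rule varb)
  qed (simp add: w_nn)
qed

end
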